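(* Let $A$ be a general metric space, let $(x_n)$ and $(y_n)$ be weakly flat sequences in $A$ and let $\mathcal F$ be a flat filter on $A$ with $(x_n)\to\mathcal F$ and $(y_n)\to\mathcal F$. Then there exists a forward Cauchy sequence $(z_n)$ in $A$ such that $(x_n)\to(z_n)$, $(y_n)\to(z_n)$ and $(z_n)\to\mathcal F$.
   Context: A general metric space $A$ is a set with $A(-,-):A\times A\to[0,\infty]$, $A(x,x)=0$, $A(x,z)\le A(x,y)+A(y,z)$. A filter on $A$ is a nonempty set of nonempty subsets closed under finite intersections and supersets. $\mathcal F$ is weakly flat iff for every $\epsilon>0$ there is $f\in\mathcal F$ such that for all $x\in f$ and all $g\in\mathcal F$ there is $y\in g$ with $A(x,y)\le\epsilon$; flat iff for every $\epsilon>0$ there is $f\in\mathcal F$ such that for every finite family $x_1,\dots,x_n\in f$ and every $g\in\mathcal F$ there is $y\in g$ with $A(x_i,y)\le\epsilon$ for all $i$. For weakly flat filters, $\mathcal F_1\to\mathcal F_2$ iff for every $\epsilon>0$ there is $f\in\mathcal F_1$ such that for every $x\in f$ and every $g\in\mathcal F_2$ there is $y\in g$ with $A(x,y)\le\epsilon$. A sequence is identified with its filter, generated by the tails $\{x_p:p\ge n\}$; a sequence is weakly flat if its filter is. $(z_n)$ is forward Cauchy iff for every $\epsilon>0$ there is $N$ with $A(z_n,z_m)\le\epsilon$ whenever $m\ge n\ge N$. *)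

theory Defs
  imports "HOL-Analysis.Analysis" "HOL-Library.Extended_Nonnegative_Real"
begin

definition gen_metric :: "('a \<Rightarrow> 'a \<Rightarrow> ennreal) \<Rightarrow> bool" where
  "gen_metric d \<longleftrightarrow> (\<forall>x. d x x = 0) \<and> (\<forall>x y z. d x z \<le> d x y + d y z)"

definition is_filter :: "'a set set \<Rightarrow> bool" where
  "is_filter F \<longleftrightarrow> F \<noteq> {} \<and> (\<forall>f\<in>F. f \<noteq> {})
     \<and> (\<forall>f\<in>F. \<forall>g\<in>F. f \<inter> g \<in> F)
     \<and> (\<forall>f\<in>F. \<forall>g. f \<subseteq> g \<longrightarrow> g \<in> F)"

definition weakly_flat :: "('a \<Rightarrow> 'a \<Rightarrow> ennreal) \<Rightarrow> 'a set set \<Rightarrow> bool" where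
  "weakly_flat d F \<longleftrightarrow> (\<forall>\<epsilon>::real. \<epsilon> > 0 \<longrightarrow>
     (\<exists>f\<in>F. \<forall>x\<in>f. \<forall>g\<in>F. \<exists>y\<in>g. d x y \<le> ennreal \<epsilon>))"

definition flat :: "('a \<Rightarrow> 'a \<Rightarrow> ennreal) \<Rightarrow> 'a set set \<Rightarrow> bool" where
  "flat d F \<longleftrightarrow> (\<forall>\<epsilon>::real. \<epsilon> > 0 \<longrightarrow>
     (\<exists>f\<in>F. \<forall>S. finite S \<and> S \<subseteq> f \<longrightarrow>
        (\<forall>g\<in>F. \<exists>y\<in>g. \<forall>x\<in>S. d x y \<le> ennreal \<epsilon>)))"

definition fconv :: "('a \<Rightarrow> 'a \<Rightarrow> ennreal) \<Rightarrow> 'a set set \<Rightarrow> 'a set set \<Rightarrow> bool" where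
  "fconv d F1 F2 \<longleftrightarrow> (\<forall>\<epsilon>::real. \<epsilon> > 0 \<longrightarrow>
     (\<exists>f\<in>F1. \<forall>x\<in>f. \<forall>g\<in>F2. \<exists>y\<in>g. d x y \<le> ennreal \<epsilon>))"

definition seq_filter :: "(nat \<Rightarrow> 'a) \<Rightarrow> 'a set set" where
  "seq_filter x = {g. \<exists>n. {x p | p. p \<ge> n} \<subseteq> g}"

definition forward_cauchy :: "('a \<Rightarrow> 'a \<Rightarrow> ennreal) \<Rightarrow> (nat \<Rightarrow> 'a) \<Rightarrow> bool" where
  "forward_cauchy d z \<longleftrightarrow> (\<forall>\<epsilon>::real. \<epsilon> > 0 \<longrightarrow>
     (\<exists>N. \<forall>n m. N \<le> n \<and> n \<le> m \<longrightarrow> d (z n) (z m) \<le> ennreal \<epsilon>))"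

end

theory Submission
  imports Defs
begin

lemma tail_in: "{w p | p. p \<ge> N} \<in> seq_filter w"
  by (auto simp: seq_filter_def)

lemma in_sf: "g \<in> seq_filter w \<Longrightarrow> \<exists>M. \<forall>p\<ge>M. w p \<in> g"
  by (auto simp: seq_filter_def)

theorem mainTheorem14:
  fixes d :: "'a \<Rightarrow> 'a \<Rightarrow> ennreal"
    and x y :: "nat \<Rightarrow> 'a"
    and F :: "'a set set"
  assumes "gen_metric d"
    and "weakly_flat d (seq_filter x)"
    and "weakly_flat d (seq_filter y)"
    and "is_filter F"
    and "flat d F"
    and "fconv d (seq_filter x) F"
    and "fconv d (seq_filter y) F"
  shows "\<exists>z :: nat \<Rightarrow> 'a. forward_cauchy d z
           \<and> fconv d (seq_filter x) (seq_filter z)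
           \<and> fconv d (seq_filter y) (seq_filter z)
           \<and> fconv d (seq_filter z) F"
proof -
  have tri: "\<And>a b c. d a c \<le> d a b + d b c" using assms(1) by (auto simp: gen_metric_def)
  define e where "e = (\<lambda>m::nat. (1/2::real)^m)"
  have epos: "\<And>m. e m > 0" by (simp add: e_def)
  have emono: "\<And>m n. m \<le> n \<Longrightarrow> e n \<le> e m" by (simp add: e_def power_decreasing)
  have esmall: "\<And>\<epsilon>. \<epsilon> > 0 \<Longrightarrow> \<exists>k. e k < \<epsilon>"
    unfolding e_def by (rule real_arch_pow_inv) auto
  have "\<forall>m. \<exists>f\<in>F. \<forall>S. finite S \<and> S \<subseteq> f \<longrightarrow> (\<forall>g\<in>F. \<exists>q\<in>g. \<forall>u\<in>S. d u q \<le> ennreal (e m))"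
    using assms(5) epos unfolding flat_def by blast
  then obtain fl where fl: "\<And>m. fl m \<in> F"
    "\<And>m S g. finite S \<Longrightarrow> S \<subseteq> fl m \<Longrightarrow> g \<in> F \<Longrightarrow> \<exists>q\<in>g. \<forall>u\<in>S. d u q \<le> ennreal (e m)"
    by metis
  define P where "P w n k \<longleftrightarrow> (\<forall>g\<in>F. \<exists>a\<in>g. d (w n) a \<le> ennreal (e k))" for w :: "nat \<Rightarrow> 'a" and n k
  define Q where "Q m p q \<longleftrightarrow> q \<in> fl (Suc m) \<and> d p q \<le> ennreal (e m) \<and>
     (\<forall>n\<le>m. \<forall>k\<le>m. (P x n k \<longrightarrow> d (x n) q \<le> ennreal (e k + e m))
        \<and> (P y n k \<longrightarrow> d (y n) q \<le> ennreal (e k + e m)))" for m p q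
  have step: "\<exists>q. Q m p q" if pin: "p \<in> fl m" for m p
  proof -
    define I where "I = {..m} \<times> {..m::nat}"
    have finI: "finite I" by (simp add: I_def)
    have "\<forall>nk\<in>I. \<exists>a. P x (fst nk) (snd nk) \<longrightarrow> a \<in> fl m \<and> d (x (fst nk)) a \<le> ennreal (e (snd nk))"
      using fl(1) unfolding P_def by blast
    then obtain ax where ax: "\<And>nk. nk \<in> I \<Longrightarrow> P x (fst nk) (snd nk) \<Longrightarrow> ax nk \<in> fl m \<and> d (x (fst nk)) (ax nk) \<le> ennreal (e (snd nk))"
      by metis
    have "\<forall>nk\<in>I. \<exists>a. P y (fst nk) (snd nk) \<longrightarrow> a \<in> fl m \<and> d (y (fst nk)) a \<le> ennreal (e (snd nk))"
      using fl(1) unfolding P_def by blast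
    then obtain ay where ay: "\<And>nk. nk \<in> I \<Longrightarrow> P y (fst nk) (snd nk) \<Longrightarrow> ay nk \<in> fl m \<and> d (y (fst nk)) (ay nk) \<le> ennreal (e (snd nk))"
      by metis
    define S where "S = insert p (ax ` {nk\<in>I. P x (fst nk) (snd nk)} \<union> ay ` {nk\<in>I. P y (fst nk) (snd nk)})"
    have "finite S" using finI by (simp add: S_def)
    moreover have "S \<subseteq> fl m" using ax ay pin by (auto simp: S_def)
    ultimately obtain q where q: "q \<in> fl (Suc m)" "\<And>u. u \<in> S \<Longrightarrow> d u q \<le> ennreal (e m)"
      using fl(2)[of S m "fl (Suc m)"] fl(1) by blast
    have "Q m p q"
      unfolding Q_def
    proof (intro conjI allI impI)
      show "q \<in> fl (Suc m)" by (rule q(1))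
      show "d p q \<le> ennreal (e m)" using q(2) by (simp add: S_def)
    next
      fix n k assume nk: "n \<le> m" "k \<le> m"
      have em: "0 \<le> e m" "0 \<le> e k" using epos by (auto intro: less_imp_le)
      {
        assume "P x n k"
        hence a: "ax (n,k) \<in> S" "d (x n) (ax (n,k)) \<le> ennreal (e k)"
          using ax[of "(n,k)"] nk by (auto simp: S_def I_def)
        have "d (x n) q \<le> d (x n) (ax (n,k)) + d (ax (n,k)) q" by (rule tri)
        also have "\<dots> \<le> ennreal (e k) + ennreal (e m)" using a q(2) by (intro add_mono) auto
        also have "\<dots> = ennreal (e k + e m)" using em by (simp add: ennreal_plus)
        finally show "d (x n) q \<le> ennreal (e k + e m)" .
      }
      {
        assume "P y n k"
        hence a: "ay (n,k) \<in> S" "d (y n) (ay (n,k)) \<le> ennreal (e k)"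
          using ay[of "(n,k)"] nk by (auto simp: S_def I_def)
        have "d (y n) q \<le> d (y n) (ay (n,k)) + d (ay (n,k)) q" by (rule tri)
        also have "\<dots> \<le> ennreal (e k) + ennreal (e m)" using a q(2) by (intro add_mono) auto
        also have "\<dots> = ennreal (e k + e m)" using em by (simp add: ennreal_plus)
        finally show "d (y n) q \<le> ennreal (e k + e m)" .
      }
    qed
    thus ?thesis by blast
  qed
  define nxt where "nxt m p = (SOME q. Q m p q)" for m p
  have "fl 0 \<noteq> {}" using assms(4) fl(1) by (auto simp: is_filter_def)
  then obtain z0 where z0: "z0 \<in> fl 0" by blast
  define z where "z = rec_nat z0 nxt"
  have zS: "z (Suc m) = nxt m (z m)" for m by (simp add: z_def)
  have zQ: "z m \<in> fl m \<and> Q m (z m) (z (Suc m))" for m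
  proof (induction m)
    case 0
    have "z 0 \<in> fl 0" using z0 by (simp add: z_def)
    then show ?case unfolding zS nxt_def using step by (metis someI_ex)
  next
    case (Suc m)
    then have "z (Suc m) \<in> fl (Suc m)" by (simp add: Q_def)
    then show ?case unfolding zS[of "Suc m"] nxt_def using step by (metis someI_ex)
  qed
  have zin: "z m \<in> fl m" for m using zQ by blast
  have zstep: "d (z m) (z (Suc m)) \<le> ennreal (e m)" for m using zQ[of m] by (simp add: Q_def)
  have e2: "e m = 2 * e (Suc m)" for m by (simp add: e_def)
  have cauchy: "d (z n) (z (n + j)) \<le> ennreal (2 * e n - 2 * e (n + j))" for n j
  proof (induction j)
    case 0
    then show ?case using assms(1) by (simp add: gen_metric_def)
  next
    case (Suc j)
    have "d (z n) (z (n + Suc j)) \<le> d (z n) (z (n + j)) + d (z (n + j)) (z (Suc (n + j)))"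
      using tri by simp
    also have "\<dots> \<le> ennreal (2 * e n - 2 * e (n + j)) + ennreal (e (n + j))"
      using Suc zstep by (intro add_mono) auto
    also have "\<dots> = ennreal (2 * e n - 2 * e (n + j) + e (n + j))"
      using emono[of n "n+j"] epos[of "n+j"] by (intro ennreal_plus[symmetric]) auto
    also have "2 * e n - 2 * e (n + j) + e (n + j) = 2 * e n - 2 * e (n + Suc j)"
      using e2[of "n+j"] by simp
    finally show ?case .
  qed
  have fc: "forward_cauchy d z"
    unfolding forward_cauchy_def
  proof (intro allI impI)
    fix \<epsilon> :: real assume "\<epsilon> > 0"
    then obtain N where N: "e N < \<epsilon> / 2" using esmall[of "\<epsilon>/2"] by auto
    have "d (z n) (z m) \<le> ennreal \<epsilon>" if "N \<le> n" "n \<le> m" for n m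
    proof -
      obtain j where j: "m = n + j" using \<open>n \<le> m\<close> le_Suc_ex by blast
      have "d (z n) (z m) \<le> ennreal (2 * e n - 2 * e (n + j))" using cauchy j by simp
      also have "\<dots> \<le> ennreal \<epsilon>" using emono[OF \<open>N \<le> n\<close>] epos[of "n+j"] N
        by (intro ennreal_leI) auto
      finally show ?thesis .
    qed
    then show "\<exists>N. \<forall>n m. N \<le> n \<and> n \<le> m \<longrightarrow> d (z n) (z m) \<le> ennreal \<epsilon>" by blast
  qed
  have zF: "fconv d (seq_filter z) F"
    unfolding fconv_def
  proof (intro allI impI)
    fix \<epsilon> :: real assume "\<epsilon> > 0"
    then obtain N where N: "e N < \<epsilon>" using esmall by auto
    have "\<forall>u\<in>{z p | p. p \<ge> N}. \<forall>g\<in>F. \<exists>q\<in>g. d u q \<le> ennreal \<epsilon>"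
    proof (intro ballI)
      fix u g assume u: "u \<in> {z p | p. p \<ge> N}" and g: "g \<in> F"
      then obtain p where p: "u = z p" "p \<ge> N" by auto
      obtain q where "q \<in> g" "d u q \<le> ennreal (e p)"
        using fl(2)[of "{u}" p g] zin[of p] p g by auto
      moreover have "ennreal (e p) \<le> ennreal \<epsilon>" using emono[OF p(2)] N by (intro ennreal_leI) auto
      ultimately show "\<exists>q\<in>g. d u q \<le> ennreal \<epsilon>" using order_trans by blast
    qed
    then show "\<exists>f\<in>seq_filter z. \<forall>u\<in>f. \<forall>g\<in>F. \<exists>q\<in>g. d u q \<le> ennreal \<epsilon>"
      using tail_in by blast
  qed
  have conv: "fconv d (seq_filter w) (seq_filter z)"
    if w: "fconv d (seq_filter w) F"
      and wQ: "\<And>m n k. n \<le> m \<Longrightarrow> k \<le> m \<Longrightarrow> P w n k \<Longrightarrow> d (w n) (z (Suc m)) \<le> ennreal (e k + e m)"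
    for w
    unfolding fconv_def
  proof (intro allI impI)
    fix \<epsilon> :: real assume "\<epsilon> > 0"
    then obtain k where k: "e k < \<epsilon> / 2" using esmall[of "\<epsilon>/2"] by auto
    obtain f where f: "f \<in> seq_filter w" "\<forall>u\<in>f. \<forall>g\<in>F. \<exists>q\<in>g. d u q \<le> ennreal (e k)"
      using w epos[of k] unfolding fconv_def by blast
    obtain N where N: "\<And>p. p \<ge> N \<Longrightarrow> w p \<in> f" using in_sf[OF f(1)] by blast
    have "\<forall>u\<in>{w p | p. p \<ge> N}. \<forall>g\<in>seq_filter z. \<exists>q\<in>g. d u q \<le> ennreal \<epsilon>"
    proof (intro ballI)
      fix u g assume u: "u \<in> {w p | p. p \<ge> N}" and g: "g \<in> seq_filter z"
      then obtain n where n: "u = w n" "n \<ge> N" by auto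
      have Pn: "P w n k" using f(2) N[OF n(2)] unfolding P_def by blast
      obtain M where M: "\<And>p. p \<ge> M \<Longrightarrow> z p \<in> g" using in_sf[OF g] by blast
      define m where "m = max (max n k) M"
      have "d u (z (Suc m)) \<le> ennreal (e k + e m)" using wQ[of n m k] Pn n by (simp add: m_def)
      also have "\<dots> \<le> ennreal \<epsilon>" proof (intro ennreal_leI)
        have "e m \<le> e k" using emono[of k m] by (simp add: m_def)
        then show "e k + e m \<le> \<epsilon>" using k by linarith
      qed
      finally show "\<exists>q\<in>g. d u q \<le> ennreal \<epsilon>" using M[of "Suc m"] by (auto simp: m_def)
    qed
    then show "\<exists>f\<in>seq_filter w. \<forall>u\<in>f. \<forall>g\<in>seq_filter z. \<exists>q\<in>g. d u q \<le> ennreal \<epsilon>"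
      using tail_in by blast
  qed
  have "fconv d (seq_filter x) (seq_filter z)"
    using conv[OF assms(6)] zQ by (simp add: Q_def)
  moreover have "fconv d (seq_filter y) (seq_filter z)"
    using conv[OF assms(7)] zQ by (simp add: Q_def)
  ultimately show ?thesis using fc zF by blast
qed

end
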